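(* Let $\alpha\ge-1$ and $m,n\in\mathbb{N}$ with $m=m_1+\dots+m_k$ and $n=n_1+\dots+n_k$, where $m_j\in\mathbb{N}_0$ and $n_j\in\mathbb{N}$ for $j=1,\dots,k$. Put $s=\frac mn+1$, $N=m+n$, $N_j=m_j+n_j$, $s_j=\frac{m_j}{n_j}+1$. Then there is a constant $C>0$ independent of $g$ such that $$\|g\|^N_{\mathscr{B}^s_\alpha}\le C\,\|g\|^{N_1}_{\mathscr{B}^{s_1}_\alpha}\cdots\|g\|^{N_k}_{\mathscr{B}^{s_k}_\alpha}\qquad(g\in\mathcal{H}(\mathbb{D})).$$
   Context: $\mathbb{D}$ is the unit disc, $\mathcal{H}(\mathbb{D})$ the analytic functions on it, $dA$ normalized area measure. For $\psi:\mathbb{D}\to\mathbb{R}$, $|\nabla\psi|(z)=\limsup_{w\to z}|\psi(w)-\psi(z)|/|w-z|$. Let $\phi_a(z)=\frac{a-z}{1-\bar a z}$. For $q\ge1$, $\|g\|_{\mathscr{B}^q}^q=\sup_{z\in\mathbb{D}}(1-|z|^2)|\nabla|g|^q|(z)$ and $\|g\|_{BMOA^q}^{2q}=\sup_{a\in\mathbb{D}}\int_{\mathbb{D}}(1-|\phi_a|^2)|\nabla|g|^q|^2\,dA$. Write $\|\cdot\|_{\mathscr{B}^q_\alpha}=\|\cdot\|_{\mathscr{B}^q}$ for $\alpha>-1$ and $\|\cdot\|_{\mathscr{B}^q_{-1}}=\|\cdot\|_{BMOA^q}$ (values in $[0,\infty]$). *)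

theory Defs
  imports "HOL-Analysis.Analysis"
begin

abbreviation unit_disc :: "complex set" where "unit_disc \<equiv> ball 0 1"

text \<open>Positive real powers on [0,\<infinity>] (exponent assumed positive): \<infinity>^p = \<infinity>.\<close>
definition enn_powr :: "ennreal \<Rightarrow> real \<Rightarrow> ennreal" where
  "enn_powr x p = (if x = \<infinity> then \<infinity> else ennreal (enn2real x powr p))"

definition grad_abs :: "(complex \<Rightarrow> real) \<Rightarrow> complex \<Rightarrow> ennreal" where
  "grad_abs \<psi> z = Limsup (at z) (\<lambda>w. ennreal (\<bar>\<psi> w - \<psi> z\<bar> / cmod (w - z)))"

definition mobius :: "complex \<Rightarrow> complex \<Rightarrow> complex" where
  "mobius a z = (a - z) / (1 - cnj a * z)"

definition area_int :: "(complex \<Rightarrow> ennreal) \<Rightarrow> ennreal" where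
  "area_int f = (\<integral>\<^sup>+ z. f z * indicator unit_disc z \<partial>lborel) / ennreal pi"

definition bloch_q_pow :: "real \<Rightarrow> (complex \<Rightarrow> complex) \<Rightarrow> ennreal" where
  "bloch_q_pow q g = (SUP z\<in>unit_disc. ennreal (1 - (cmod z)\<^sup>2) * grad_abs (\<lambda>w. cmod (g w) powr q) z)"

definition bloch_q_norm :: "real \<Rightarrow> (complex \<Rightarrow> complex) \<Rightarrow> ennreal" where
  "bloch_q_norm q g = enn_powr (bloch_q_pow q g) (1 / q)"

definition bmoa_q_pow :: "real \<Rightarrow> (complex \<Rightarrow> complex) \<Rightarrow> ennreal" where
  "bmoa_q_pow q g = (SUP a\<in>unit_disc. area_int (\<lambda>z. ennreal (1 - (cmod (mobius a z))\<^sup>2)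
       * (grad_abs (\<lambda>w. cmod (g w) powr q) z)\<^sup>2))"

definition bmoa_q_norm :: "real \<Rightarrow> (complex \<Rightarrow> complex) \<Rightarrow> ennreal" where
  "bmoa_q_norm q g = enn_powr (bmoa_q_pow q g) (1 / (2 * q))"

definition B_alpha_norm :: "real \<Rightarrow> real \<Rightarrow> (complex \<Rightarrow> complex) \<Rightarrow> ennreal" where
  "B_alpha_norm \<alpha> q g = (if \<alpha> = -1 then bmoa_q_norm q g else bloch_q_norm q g)"

end

theory Submission
  imports Defs "HOL-Complex_Analysis.Complex_Analysis"
begin
lemma Limsup_filter_mono:
  fixes f :: "'a \<Rightarrow> 'b::complete_lattice"
  assumes "F \<le> G" shows "Limsup F f \<le> Limsup G f"
  unfolding Limsup_def
proof (rule INF_mono)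
  fix P assume "P \<in> {P. eventually P G}"
  then have "eventually P F" using assms by (simp add: filter_leD)
  then show "\<exists>Q\<in>{P. eventually P F}. Sup (f ` Collect Q) \<le> Sup (f ` Collect P)" by blast
qed

lemma grad_abs_deriv:
  fixes \<psi> :: "complex \<Rightarrow> real"
  assumes der: "(\<psi> has_derivative L) (at z)"
    and bnd: "\<And>h. \<bar>L h\<bar> \<le> T * cmod h"
    and u: "cmod u = 1" "L u = T" and T: "T \<ge> 0"
  shows "grad_abs \<psi> z = ennreal T"
proof -
  define R where "R w = \<bar>\<psi> w - \<psi> z\<bar> / cmod (w - z)" for w
  define e where "e w = \<bar>\<psi> w - \<psi> z - L (w - z)\<bar> / cmod (w - z)" for w
  have lin: "linear L" using der has_derivative_linear by blast
  have e0: "(e \<longlongrightarrow> 0) (at z)"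
  proof -
    have "((\<lambda>y. (\<psi> y - \<psi> z - L (y - z)) /\<^sub>R norm (y - z)) \<longlongrightarrow> 0) (at z)"
      using der unfolding has_derivative_at_within by simp
    then have "((\<lambda>y. norm ((\<psi> y - \<psi> z - L (y - z)) /\<^sub>R norm (y - z))) \<longlongrightarrow> 0) (at z)"
      using tendsto_norm_zero by blast
    then show ?thesis unfolding e_def by (simp add: divide_inverse mult.commute abs_mult)
  qed
  have up: "R w \<le> T + e w" if "w \<noteq> z" for w
  proof -
    have "\<bar>\<psi> w - \<psi> z\<bar> \<le> \<bar>L (w - z)\<bar> + \<bar>\<psi> w - \<psi> z - L (w - z)\<bar>" by linarith
    also have "\<dots> \<le> T * cmod (w - z) + \<bar>\<psi> w - \<psi> z - L (w - z)\<bar>" using bnd by simp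
    finally have "\<bar>\<psi> w - \<psi> z\<bar> / cmod (w - z) \<le> (T * cmod (w - z) + \<bar>\<psi> w - \<psi> z - L (w - z)\<bar>) / cmod (w - z)"
      by (rule divide_right_mono) simp
    then show ?thesis using that unfolding R_def e_def by (simp add: add_divide_distrib)
  qed
  have "grad_abs \<psi> z \<le> Limsup (at z) (\<lambda>w. ennreal (T + e w))"
    unfolding grad_abs_def R_def[symmetric]
  proof (intro Limsup_mono)
    have "eventually (\<lambda>w. w \<noteq> z) (at z)" by (simp add: eventually_at_filter)
    then show "\<forall>\<^sub>F w in at z. ennreal (R w) \<le> ennreal (T + e w)"
      by (rule eventually_mono) (simp add: up ennreal_leI)
  qed
  also have "\<dots> = ennreal T"
    by (intro lim_imp_Limsup) (auto intro!: tendsto_ennrealI tendsto_eq_intros e0)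
  finally have A: "grad_abs \<psi> z \<le> ennreal T" .
  define h where "h t = z + of_real t * u" for t :: real
  have hlim: "filterlim h (at z) (at_right 0)"
  proof -
    have "(h \<longlongrightarrow> z) (at_right 0)" unfolding h_def by (auto intro!: tendsto_eq_intros)
    moreover have "eventually (\<lambda>t. h t \<noteq> z) (at_right 0)"
      using eventually_at_right_less[of 0] by (rule eventually_mono) (use u in \<open>auto simp: h_def\<close>)
    ultimately show ?thesis by (simp add: filterlim_at)
  qed
  have low: "T - e (h t) \<le> R (h t)" if "t > 0" for t
  proof -
    have Lt: "L (h t - z) = t * T" using u lin unfolding h_def
      by (simp add: linear_scale[OF lin] scaleR_conv_of_real[symmetric])
    have n: "cmod (h t - z) = t" using u that by (simp add: h_def norm_mult)
    have "t * T \<le> \<bar>\<psi> (h t) - \<psi> z\<bar> + \<bar>\<psi> (h t) - \<psi> z - L (h t - z)\<bar>" using Lt by linarith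
    then show ?thesis unfolding R_def e_def n using that by (simp add: divide_simps add_divide_distrib mult.commute)
  qed
  have "ennreal T = Limsup (at_right 0) (\<lambda>t. ennreal (T - e (h t)))"
  proof (rule lim_imp_Limsup[symmetric])
    show "\<not> trivial_limit (at_right (0::real))" by simp
    have "((\<lambda>t. e (h t)) \<longlongrightarrow> 0) (at_right 0)" using filterlim_compose[OF e0 hlim] .
    then show "((\<lambda>t. ennreal (T - e (h t))) \<longlongrightarrow> ennreal T) (at_right 0)"
      by (auto intro!: tendsto_ennrealI tendsto_eq_intros)
  qed
  also have "\<dots> \<le> Limsup (at_right 0) (\<lambda>t. ennreal (R (h t)))"
    by (intro Limsup_mono eventually_mono[OF eventually_at_right_less[of 0]]) (simp add: low ennreal_leI)
  also have "\<dots> \<le> Limsup (filtermap h (at_right 0)) (\<lambda>w. ennreal (R w))"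
    by (rule Limsup_filtermap_ge)
  also have "\<dots> \<le> grad_abs \<psi> z"
    unfolding grad_abs_def R_def[symmetric]
    by (rule Limsup_filter_mono) (use hlim in \<open>simp add: filterlim_def\<close>)
  finally show ?thesis using A by simp
qed


lemma grad_abs_pow:
  fixes g :: "complex \<Rightarrow> complex" and m n :: nat
  assumes der: "(g has_field_derivative c) (at z)" and n: "n \<ge> 1"
  shows "grad_abs (\<lambda>w. cmod (g w) powr (real m / real n + 1)) z
     = ennreal ((real m / real n + 1) * (cmod (g z) ^ m) powr (1 / real n) * cmod c)"
proof (cases "g z = 0")
  case False
  define q where "q = real m / real n + 1"
  define a where "a = cmod (g z)"
  have a: "a > 0" using False by (simp add: a_def)
  have q: "q \<ge> 1" by (simp add: q_def)
  have d1: "(g has_derivative (\<lambda>h. c * h)) (at z)"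
    using der by (simp add: has_field_derivative_def mult_commute_abs)
  have d2: "((\<lambda>w. cmod (g w)) has_derivative (\<lambda>h. (c * h) \<bullet> sgn (g z))) (at z)"
    by (rule has_derivative_compose[OF d1 has_derivative_norm[OF False]])
  have d3: "((\<lambda>w. cmod (g w) powr q) has_derivative
      (\<lambda>h. a powr q * (0 * ln a + (c * h) \<bullet> sgn (g z) * q / a))) (at z)"
    using has_derivative_powr[OF d2 has_derivative_const[of q]] a by (simp add: a_def)
  define K where "K = a powr q * q / a"
  have K: "K \<ge> 0" using a q by (simp add: K_def)
  have d4: "((\<lambda>w. cmod (g w) powr q) has_derivative (\<lambda>h. K * ((c * h) \<bullet> sgn (g z)))) (at z)"
    using d3 by (simp add: K_def mult_ac)
  have KT: "K * cmod c = (real m / real n + 1) * (cmod (g z) ^ m) powr (1 / real n) * cmod c"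
  proof -
    have "a powr q / a = a powr (q - 1)" using a by (simp add: powr_diff)
    also have "\<dots> = (a ^ m) powr (1 / real n)" using a
      by (simp add: q_def powr_realpow[symmetric] powr_powr)
    finally have "K = q * (a ^ m) powr (1 / real n)" unfolding K_def
      by (metis times_divide_eq_right mult.commute)
    then show ?thesis by (simp add: q_def a_def)
  qed
  have bnd: "\<bar>K * ((c * h) \<bullet> sgn (g z))\<bar> \<le> K * cmod c * cmod h" for h
  proof -
    have "\<bar>(c * h) \<bullet> sgn (g z)\<bar> \<le> norm (c * h) * norm (sgn (g z))" by (rule Cauchy_Schwarz_ineq2)
    also have "\<dots> = cmod c * cmod h" using False by (simp add: norm_sgn norm_mult)
    finally show ?thesis using K by (simp add: abs_mult mult.assoc mult_left_mono)
  qed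
  obtain u where u: "cmod u = 1" "(c * u) \<bullet> sgn (g z) = cmod c"
  proof (cases "c = 0")
    case True then show ?thesis using that[of 1] by simp
  next
    case False
    define u where "u = cnj c * sgn (g z) / of_real (cmod c)"
    have "cmod u = 1" using False \<open>g z \<noteq> 0\<close> by (simp add: u_def norm_mult norm_divide norm_sgn)
    moreover have "c * u = cmod c *\<^sub>R sgn (g z)"
    proof -
      have cc: "c * cnj c = of_real (cmod c) * of_real (cmod c)"
        using complex_norm_square[of c] by (simp add: power2_eq_square)
      have "c * u = (c * cnj c) * sgn (g z) / of_real (cmod c)" by (simp add: u_def mult.assoc)
      also have "\<dots> = of_real (cmod c) * sgn (g z)" unfolding cc using False by simp
      finally show ?thesis by (simp add: scaleR_conv_of_real)
    qed
    moreover have "sgn (g z) \<bullet> sgn (g z) = 1" using \<open>g z \<noteq> 0\<close>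
      by (simp add: power2_norm_eq_inner[symmetric] norm_sgn)
    ultimately show ?thesis using that[of u] by simp
  qed
  have "grad_abs (\<lambda>w. cmod (g w) powr q) z = ennreal (K * cmod c)"
    by (rule grad_abs_deriv[OF d4 _ u(1)]) (use bnd u K in \<open>auto simp: mult.assoc\<close>)
  then show ?thesis using KT by (simp add: q_def)
next
  case True
  define q where "q = real m / real n + 1"
  have cont: "(g \<longlongrightarrow> g z) (at z)" using der DERIV_isCont isCont_def by blast
  have quot: "((\<lambda>w. cmod ((g w - g z) / (w - z))) \<longlongrightarrow> cmod c) (at z)"
    using der unfolding has_field_derivative_iff by (rule tendsto_norm)
  have lim: "((\<lambda>w. \<bar>cmod (g w) powr q - cmod (g z) powr q\<bar> / cmod (w - z)) \<longlongrightarrow>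
      q * (cmod (g z) ^ m) powr (1 / real n) * cmod c) (at z)"
  proof (cases "m = 0")
    case True
    then show ?thesis using quot \<open>g z = 0\<close> by (simp add: q_def norm_divide)
  next
    case False
    have e: "\<bar>cmod (g w) powr q - cmod (g z) powr q\<bar> / cmod (w - z)
        = cmod (g w) powr (real m / real n) * cmod ((g w - g z) / (w - z))" for w
      using \<open>g z = 0\<close> by (simp add: q_def powr_add norm_divide)
    have "((\<lambda>w. cmod (g w) powr (real m / real n)) \<longlongrightarrow> cmod (g z) powr (real m / real n)) (at z)"
      using False n by (intro tendsto_powr' tendsto_norm cont) auto
    then have "((\<lambda>w. cmod (g w) powr (real m / real n) * cmod ((g w - g z) / (w - z))) \<longlongrightarrow>
        0 * cmod c) (at z)"
      using \<open>g z = 0\<close> by (intro tendsto_mult quot) simp_all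
    then show ?thesis unfolding e using \<open>g z = 0\<close> False by (simp add: power_0_left)
  qed
  show ?thesis unfolding grad_abs_def q_def[symmetric]
    by (intro lim_imp_Limsup tendsto_ennrealI lim) simp
qed

lemma key_real:
  fixes mm nn :: "nat \<Rightarrow> nat" and I :: "nat set" and x d A :: real and e Nn Mm :: nat
  assumes fin: "finite I" and ne: "I \<noteq> {}" and nn: "\<forall>j\<in>I. nn j \<ge> 1" and M: "(\<Sum>j\<in>I. mm j) \<ge> 1"
    and x: "x \<ge> 0" and d: "d \<ge> 0" and e1: "e \<ge> 1"
    and Nn_def: "Nn = (\<Sum>j\<in>I. nn j)" and Mm_def: "Mm = (\<Sum>j\<in>I. mm j)"
  defines "F \<equiv> \<lambda>m n. (real m / real n + 1) * (x ^ m) powr (1 / real n) * d"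
    and "c0 \<equiv> (real Mm / real Nn + 1) / (\<Prod>j\<in>I. (real (mm j) / real (nn j) + 1) powr (real (nn j) / real Nn))"
  shows "A * F Mm Nn ^ e \<le> c0 ^ e * (\<Prod>j\<in>I. (A * F (mm j) (nn j) ^ e) powr (real (nn j) / real Nn))"
proof -
  define th where "th j = real (nn j) / real Nn" for j
  obtain j0 where j0: "j0 \<in> I" using ne by blast
  have "nn j0 \<le> Nn" unfolding Nn_def using fin j0 by (intro member_le_sum) auto
  then have Nn1: "Nn \<ge> 1" using nn j0 by auto
  have th0: "th j > 0" if "j \<in> I" for j using nn that Nn1 by (auto simp: th_def)
  have sumth: "(\<Sum>j\<in>I. th j) = 1"
  proof -
    have s: "(\<Sum>j\<in>I. real (nn j)) = real Nn" by (simp add: Nn_def)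
    have "(\<Sum>j\<in>I. th j) = real Nn / real Nn"
      unfolding th_def sum_divide_distrib[symmetric] s ..
    then show ?thesis using Nn1 by simp
  qed
  define Q where "Q j = real (mm j) / real (nn j) + 1" for j
  have Q: "Q j > 0" for j unfolding Q_def by (intro add_nonneg_pos divide_nonneg_nonneg) auto
  define P where "P = (\<Prod>j\<in>I. Q j powr th j)"
  have P: "P > 0" unfolding P_def using Q by (intro prod_pos) (simp add: less_imp_neq[symmetric])
  have c0e: "c0 = (real Mm / real Nn + 1) / P" by (simp add: c0_def P_def Q_def th_def)
  have c0P: "c0 * P = real Mm / real Nn + 1" using P by (simp add: c0e)
  have c0: "c0 \<ge> 0" unfolding c0e using P by (intro divide_nonneg_nonneg add_nonneg_nonneg) auto
  have rhs0: "0 \<le> c0 ^ e * (\<Prod>j\<in>I. (A * F (mm j) (nn j) ^ e) powr th j)"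
    using c0 by (intro mult_nonneg_nonneg prod_nonneg) auto
  show ?thesis
  proof (cases "A \<le> 0 \<or> x = 0 \<or> d = 0")
    case True
    have Mm1: "Mm \<ge> 1" using M by (simp add: Mm_def)
    have "F Mm Nn \<ge> 0" unfolding F_def using d by simp
    moreover have "x = 0 \<Longrightarrow> F Mm Nn = 0" using Mm1 by (simp add: F_def power_0_left)
    moreover have "d = 0 \<Longrightarrow> F Mm Nn = 0" by (simp add: F_def)
    ultimately have "A * F Mm Nn ^ e \<le> 0" using True e1
      by (auto intro: mult_nonpos_nonneg simp: power_0_left)
    then show ?thesis using rhs0 unfolding th_def by linarith
  next
    case False
    then have A: "A > 0" and xp: "x > 0" and dp: "d > 0" using x d by auto
    have Fx: "F m n = (real m / real n + 1) * x powr (real m / real n) * d" for m n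
      using xp by (simp add: F_def powr_realpow[symmetric] powr_powr)
    have Fj: "F (mm j) (nn j) powr th j = Q j powr th j * x powr (real (mm j) / real Nn) * d powr th j"
      if "j \<in> I" for j
    proof -
      have "(x powr (real (mm j) / real (nn j))) powr th j = x powr (real (mm j) / real Nn)"
        using nn that by (auto simp: powr_powr th_def)
      then show ?thesis unfolding Fx Q_def[symmetric] using Q by (simp add: powr_mult)
    qed
    have Fpos: "F m n > 0" for m n unfolding Fx using xp dp by (intro mult_pos_pos add_nonneg_pos divide_nonneg_nonneg) auto
    have trm: "(A * F (mm j) (nn j) ^ e) powr th j
        = A powr th j * (Q j powr th j * x powr (real (mm j) / real Nn) * d powr th j) ^ e"
      if "j \<in> I" for j
    proof -
      have "(F (mm j) (nn j) ^ e) powr th j = (F (mm j) (nn j) powr th j) ^ e"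
        using Fpos[of "mm j" "nn j"]
        by (simp add: powr_realpow[symmetric] powr_powr powr_power mult.commute)
      then show ?thesis using Fj[OF that] by (simp add: powr_mult)
    qed
    have "(\<Prod>j\<in>I. (A * F (mm j) (nn j) ^ e) powr th j)
        = (\<Prod>j\<in>I. A powr th j) * (\<Prod>j\<in>I. Q j powr th j * x powr (real (mm j) / real Nn) * d powr th j) ^ e"
    proof -
      have "(\<Prod>j\<in>I. (A * F (mm j) (nn j) ^ e) powr th j)
         = (\<Prod>j\<in>I. A powr th j * (Q j powr th j * x powr (real (mm j) / real Nn) * d powr th j) ^ e)"
        by (rule prod.cong) (simp_all add: trm)
      also have "\<dots> = (\<Prod>j\<in>I. A powr th j) * (\<Prod>j\<in>I. (Q j powr th j * x powr (real (mm j) / real Nn) * d powr th j) ^ e)"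
        by (rule prod.distrib)
      finally show ?thesis by (simp only: prod_power_distrib)
    qed
    also have "(\<Prod>j\<in>I. A powr th j) = A" using A sumth by (simp add: powr_sum[symmetric])
    also have "(\<Prod>j\<in>I. Q j powr th j * x powr (real (mm j) / real Nn) * d powr th j)
        = P * x powr (real Mm / real Nn) * d"
    proof -
      have "(\<Prod>j\<in>I. x powr (real (mm j) / real Nn)) = x powr (real Mm / real Nn)"
        using xp by (simp add: powr_sum[symmetric] Mm_def sum_divide_distrib)
      moreover have "(\<Prod>j\<in>I. d powr th j) = d" using dp sumth by (simp add: powr_sum[symmetric])
      ultimately show ?thesis by (simp add: prod.distrib P_def)
    qed
    finally have R: "(\<Prod>j\<in>I. (A * F (mm j) (nn j) ^ e) powr th j) = A * (P * x powr (real Mm / real Nn) * d) ^ e" .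
    have "A * F Mm Nn ^ e = c0 ^ e * (A * (P * x powr (real Mm / real Nn) * d) ^ e)"
      unfolding Fx c0P[symmetric] by (simp add: power_mult_distrib mult_ac)
    then show ?thesis using R unfolding th_def by (simp only:)
  qed
qed

lemma enn_powr_ennreal: "y \<ge> 0 \<Longrightarrow> enn_powr (ennreal y) p = ennreal (y powr p)"
  by (simp add: enn_powr_def)

lemma enn_powr_zero[simp]: "enn_powr 0 p = 0"
  by (simp add: enn_powr_def)

lemma enn_powr_top[simp]: "enn_powr top p = top"
  by (simp add: enn_powr_def)

lemma enn_powr_one: "enn_powr x 1 = x"
  by (cases x rule: ennreal_cases) (auto simp: enn_powr_def)

lemma enn_powr_one_base[simp]: "enn_powr 1 p = 1"
  by (simp add: enn_powr_def)

lemma enn_powr_mult: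
  assumes p: "p > 0" shows "enn_powr (x * y) p = enn_powr x p * enn_powr y p"
proof (cases x rule: ennreal_cases)
  case (real a)
  then show ?thesis
  proof (cases y rule: ennreal_cases)
    case (real b)
    then show ?thesis using \<open>x = ennreal a\<close> \<open>0 \<le> a\<close>
      by (simp add: ennreal_mult[symmetric] enn_powr_ennreal powr_mult)
  next
    case top
    then show ?thesis using real p
      by (cases "a = 0") (auto simp: enn_powr_ennreal ennreal_mult_top ennreal_top_mult)
  qed
next
  case top
  then show ?thesis using p
    by (cases y rule: ennreal_cases) (auto simp: enn_powr_ennreal ennreal_top_mult ennreal_mult_top)
qed

lemma enn_powr_power:
  assumes "N \<ge> 1" shows "enn_powr x p ^ N = enn_powr x (p * real N)"
proof (cases x rule: ennreal_cases)
  case (real a)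
  have "(a powr p) ^ N = a powr (p * real N)"
  proof (cases "a = 0")
    case True then show ?thesis using assms by (simp add: power_0_left)
  next
    case False then show ?thesis by (simp add: powr_power mult.commute)
  qed
  then show ?thesis using real by (simp add: enn_powr_ennreal ennreal_power)
next
  case top then show ?thesis using assms by (simp add: power_eq_top_ennreal_iff)
qed

lemma enn_powr_powr: "enn_powr (enn_powr x p) q = enn_powr x (p * q)"
  by (cases x rule: ennreal_cases) (auto simp: enn_powr_ennreal powr_powr)

lemma enn_powr_mono: "x \<le> y \<Longrightarrow> p \<ge> 0 \<Longrightarrow> enn_powr x p \<le> enn_powr y p"
proof (cases y rule: ennreal_cases)
  case (real b)
  assume xy: "x \<le> y" and p: "p \<ge> 0"
  then obtain a where a: "x = ennreal a" "a \<ge> 0" "a \<le> b"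
    using real by (cases x rule: ennreal_cases) (auto simp: ennreal_le_iff top_unique)
  then show ?thesis using real p by (simp add: enn_powr_ennreal powr_mono2 ennreal_leI)
qed simp

lemma enn_powr_prod_exp:
  assumes "finite I" "I \<noteq> {}" "\<And>j. j \<in> I \<Longrightarrow> th j > 0"
  shows "(\<Prod>j\<in>I. enn_powr x (th j)) = enn_powr x (\<Sum>j\<in>I. th j)"
  using assms
proof (induction I rule: finite_ne_induct)
  case (singleton j) then show ?case by simp
next
  case (insert j I)
  have IH: "(\<Prod>j\<in>I. enn_powr x (th j)) = enn_powr x (\<Sum>j\<in>I. th j)" using insert by auto
  have "enn_powr x (th j) * enn_powr x (\<Sum>j\<in>I. th j) = enn_powr x (th j + (\<Sum>j\<in>I. th j))"
  proof (cases x rule: ennreal_cases)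
    case (real a)
    then show ?thesis by (simp add: enn_powr_ennreal ennreal_mult[symmetric] powr_add)
  next
    case top
    then show ?thesis by simp
  qed
  then show ?case using insert IH by simp
qed

lemma enn_powr_prod:
  assumes "p > 0" shows "enn_powr (\<Prod>j\<in>I. x j) p = (\<Prod>j\<in>I. enn_powr (x j) p)"
proof (induction I rule: infinite_finite_induct)
  case (insert j I) then show ?case using assms by (simp add: enn_powr_mult)
qed simp_all


lemma final_step:
  fixes mm nn :: "nat \<Rightarrow> nat" and I :: "nat set" and Pf :: "real \<Rightarrow> ennreal" and e c :: real
  assumes fin: "finite I" and ne: "I \<noteq> {}" and nn: "\<forall>j\<in>I. nn j \<ge> 1"
    and Nn_def: "Nn = (\<Sum>j\<in>I. nn j)" and Mm_def: "Mm = (\<Sum>j\<in>I. mm j)"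
    and e: "e > 0" and c: "c > 0"
    and K: "Pf (real Mm / real Nn + 1) \<le> ennreal c *
              (\<Prod>j\<in>I. enn_powr (Pf (real (mm j) / real (nn j) + 1)) (real (nn j) / real Nn))"
  shows "enn_powr (Pf (real Mm / real Nn + 1)) (1 / (e * (real Mm / real Nn + 1))) ^ (Mm + Nn)
    \<le> ennreal (c powr (real Nn / e)) *
      (\<Prod>j\<in>I. enn_powr (Pf (real (mm j) / real (nn j) + 1)) (1 / (e * (real (mm j) / real (nn j) + 1))) ^ (mm j + nn j))"
proof -
  obtain j0 where j0: "j0 \<in> I" using ne by blast
  have "nn j0 \<le> Nn" unfolding Nn_def using fin j0 by (intro member_le_sum) auto
  then have Nn1: "Nn \<ge> 1" using nn j0 by auto
  have ex: "1 / (e * (real m / real n + 1)) * real (m + n) = real n / e" if "n \<ge> 1" for m n :: nat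
  proof -
    have n0: "real n > 0" using that by simp
    have "real m / real n + 1 = real (m + n) / real n" using n0 by (simp add: field_simps)
    moreover have "real (m + n) > 0" using n0 by linarith
    ultimately have "1 / (e * (real m / real n + 1)) * real (m + n) = real n / (e * real (m + n)) * real (m + n)"
      by simp
    also have "\<dots> = real n / e" using \<open>real (m + n) > 0\<close> e by simp
    finally show ?thesis .
  qed
  have "enn_powr (Pf (real Mm / real Nn + 1)) (1 / (e * (real Mm / real Nn + 1))) ^ (Mm + Nn)
      = enn_powr (Pf (real Mm / real Nn + 1)) (real Nn / e)"
  proof -
    have "Mm + Nn \<ge> 1" using Nn1 by simp
    then show ?thesis by (simp only: enn_powr_power ex[OF Nn1])
  qed
  also have "\<dots> \<le> enn_powr (ennreal c *
              (\<Prod>j\<in>I. enn_powr (Pf (real (mm j) / real (nn j) + 1)) (real (nn j) / real Nn))) (real Nn / e)"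
    using e by (intro enn_powr_mono K) simp
  also have "\<dots> = ennreal (c powr (real Nn / e)) *
      (\<Prod>j\<in>I. enn_powr (Pf (real (mm j) / real (nn j) + 1)) (real (nn j) / e))"
  proof -
    have p: "real Nn / e > 0" using Nn1 e by simp
    have "(\<Prod>j\<in>I. enn_powr (enn_powr (Pf (real (mm j) / real (nn j) + 1)) (real (nn j) / real Nn)) (real Nn / e))
        = (\<Prod>j\<in>I. enn_powr (Pf (real (mm j) / real (nn j) + 1)) (real (nn j) / e))"
      using Nn1 by (intro prod.cong refl) (simp add: enn_powr_powr)
    then show ?thesis using c p
      by (simp add: enn_powr_mult enn_powr_prod enn_powr_ennreal)
  qed
  also have "(\<Prod>j\<in>I. enn_powr (Pf (real (mm j) / real (nn j) + 1)) (real (nn j) / e))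
      = (\<Prod>j\<in>I. enn_powr (Pf (real (mm j) / real (nn j) + 1)) (1 / (e * (real (mm j) / real (nn j) + 1))) ^ (mm j + nn j))"
  proof (intro prod.cong refl)
    fix j assume "j \<in> I"
    then have h: "nn j \<ge> 1" "mm j + nn j \<ge> 1" using nn by auto
    then show "enn_powr (Pf (real (mm j) / real (nn j) + 1)) (real (nn j) / e)
      = enn_powr (Pf (real (mm j) / real (nn j) + 1)) (1 / (e * (real (mm j) / real (nn j) + 1))) ^ (mm j + nn j)"
      by (simp only: enn_powr_power ex[OF h(1)])
  qed
  finally show ?thesis .
qed

lemma wamgm:
  fixes z th :: "nat \<Rightarrow> real"
  assumes fin: "finite I" and ne: "I \<noteq> {}" and th: "\<And>j. j \<in> I \<Longrightarrow> th j > 0"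
    and sumth: "(\<Sum>j\<in>I. th j) = 1" and z: "\<And>j. j \<in> I \<Longrightarrow> z j \<ge> 0"
  shows "(\<Prod>j\<in>I. z j powr th j) \<le> (\<Sum>j\<in>I. th j * z j)"
proof (cases "\<exists>j\<in>I. z j = 0")
  case True
  then have "(\<Prod>j\<in>I. z j powr th j) = 0" using fin by (auto intro: prod_zero)
  moreover have "(\<Sum>j\<in>I. th j * z j) \<ge> 0" using th z by (intro sum_nonneg) (simp add: less_imp_le)
  ultimately show ?thesis by simp
next
  case False
  then have zp: "z j > 0" if "j \<in> I" for j using z that by force
  have "ln (\<Sum>j\<in>I. th j *\<^sub>R z j) \<ge> (\<Sum>j\<in>I. th j * ln (z j))"
    by (rule concave_on_sum[OF fin ne ln_concave sumth]) (use th zp in \<open>auto simp: less_imp_le\<close>)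
  moreover have pos: "(\<Sum>j\<in>I. th j *\<^sub>R z j) > 0" using th zp fin ne by (intro sum_pos) auto
  ultimately have "exp (\<Sum>j\<in>I. th j * ln (z j)) \<le> (\<Sum>j\<in>I. th j *\<^sub>R z j)"
    by (metis exp_le_cancel_iff exp_ln)
  moreover have "exp (\<Sum>j\<in>I. th j * ln (z j)) = (\<Prod>j\<in>I. z j powr th j)"
  proof -
    have "exp (\<Sum>j\<in>I. th j * ln (z j)) = (\<Prod>j\<in>I. exp (th j * ln (z j)))" using fin by (simp add: exp_sum)
    also have "\<dots> = (\<Prod>j\<in>I. z j powr th j)"
      using zp by (intro prod.cong refl) (simp add: powr_def mult.commute less_imp_neq[symmetric])
    finally show ?thesis .
  qed
  ultimately show ?thesis by simp
qed

lemma holder_gen: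
  fixes M :: "'a measure" and G :: "nat \<Rightarrow> 'a \<Rightarrow> ennreal" and H :: "'a \<Rightarrow> ennreal"
    and th :: "nat \<Rightarrow> real"
  assumes fin: "finite I" and ne: "I \<noteq> {}" and th: "\<And>j. j \<in> I \<Longrightarrow> th j > 0"
    and sumth: "(\<Sum>j\<in>I. th j) = 1" and meas: "\<And>j. j \<in> I \<Longrightarrow> G j \<in> borel_measurable M"
    and Hle: "\<And>x. H x \<le> ennreal c * (\<Prod>j\<in>I. enn_powr (G j x) (th j))" and c: "c \<ge> 0"
  shows "(\<integral>\<^sup>+x. H x \<partial>M) \<le> ennreal c * (\<Prod>j\<in>I. enn_powr (\<integral>\<^sup>+x. G j x \<partial>M) (th j))"
proof -
  define X where "X j = (\<integral>\<^sup>+x. G j x \<partial>M)" for j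
  show ?thesis
  proof (cases "\<exists>j\<in>I. X j = 0")
    case True
    then obtain j where j: "j \<in> I" "X j = 0" by blast
    then have "AE x in M. G j x = 0" using meas[OF j(1)] by (simp add: X_def nn_integral_0_iff_AE)
    then have "AE x in M. H x \<le> 0"
    proof (rule AE_mp, intro AE_I2 impI)
      fix x assume "G j x = 0"
      then have P0: "(\<Prod>j\<in>I. enn_powr (G j x) (th j)) = 0" using fin j(1) by (intro prod_zero bexI[of _ j]) simp_all
      show "H x \<le> 0" using Hle[of x] unfolding P0 by simp
    qed
    then have "(\<integral>\<^sup>+x. H x \<partial>M) \<le> (\<integral>\<^sup>+x. 0 \<partial>M)" by (rule nn_integral_mono_AE)
    then show ?thesis by simp
  next
    case False
    note nz = False
    show ?thesis
    proof (cases "\<exists>j\<in>I. X j = top")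
      case True
      show ?thesis
      proof (cases "c = 0")
        case True
        then have "(\<integral>\<^sup>+x. H x \<partial>M) \<le> (\<integral>\<^sup>+x. 0 \<partial>M)" using Hle by (intro nn_integral_mono) simp
        then show ?thesis by simp
      next
        case False
        obtain j where j: "j \<in> I" "X j = top" using True by blast
        have ne0: "(\<Prod>i\<in>I - {j}. enn_powr (X i) (th i)) \<noteq> 0"
        proof -
          have "enn_powr (X i) (th i) \<noteq> 0" if "i \<in> I" for i
          proof (cases "X i" rule: ennreal_cases)
            case (real r)
            then have "r > 0" using nz that by auto
            then show ?thesis using real by (simp add: enn_powr_ennreal)
          qed simp
          then show ?thesis using fin by (simp add: prod_zero_iff)
        qed
        have "(\<Prod>i\<in>I. enn_powr (X i) (th i)) = enn_powr (X j) (th j) * (\<Prod>i\<in>I - {j}. enn_powr (X i) (th i))"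
          using fin j(1) by (rule prod.remove)
        also have "\<dots> = top" using j(2) ne0 by (simp add: ennreal_top_mult)
        finally have "ennreal c * (\<Prod>i\<in>I. enn_powr (X i) (th i)) = top"
          using False c by (simp add: ennreal_mult_top)
        then show ?thesis by (simp add: X_def)
      qed
    next
      case False
      define x where "x j = enn2real (X j)" for j
      have Xx: "X j = ennreal (x j)" "x j > 0" if "j \<in> I" for j
        using nz False that by (auto simp: x_def enn2real_positive_iff top.not_eq_extremum zero_less_iff_neq_zero)
      define K where "K = (\<Prod>j\<in>I. x j powr th j)"
      have K0: "K \<ge> 0" unfolding K_def by (intro prod_nonneg) simp
      have pw: "(\<Prod>j\<in>I. enn_powr (G j y) (th j)) \<le> ennreal K * (\<Sum>j\<in>I. ennreal (th j / x j) * G j y)" for y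
      proof (cases "\<exists>i\<in>I. G i y = top")
        case True
        then obtain i where i: "i \<in> I" "G i y = top" by blast
        have "top = ennreal (th i / x i) * G i y" using i th[OF i(1)] Xx[OF i(1)] by (simp add: ennreal_mult_top)
        also have "\<dots> \<le> (\<Sum>j\<in>I. ennreal (th j / x j) * G j y)"
          using fin i(1) by (intro member_le_sum) simp_all
        finally have S: "(\<Sum>j\<in>I. ennreal (th j / x j) * G j y) = top" by (simp add: top_unique)
        have "K > 0" unfolding K_def using Xx by (intro prod_pos) (auto simp: less_imp_neq[symmetric])
        then show ?thesis using S by (simp add: ennreal_mult_top)
      next
        case False
        define w where "w j = enn2real (G j y)" for j
        have Gw: "G j y = ennreal (w j)" "w j \<ge> 0" if "j \<in> I" for j
          using False that by (auto simp: w_def top.not_eq_extremum)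
        have "(\<Prod>j\<in>I. enn_powr (G j y) (th j)) = ennreal (\<Prod>j\<in>I. w j powr th j)"
          using Gw by (simp add: enn_powr_ennreal prod_ennreal cong: prod.cong)
        also have "(\<Prod>j\<in>I. w j powr th j) = K * (\<Prod>j\<in>I. (w j / x j) powr th j)"
          unfolding K_def prod.distrib[symmetric] using Xx Gw
          by (intro prod.cong refl) (force simp: powr_divide)
        also have "\<dots> \<le> K * (\<Sum>j\<in>I. th j * (w j / x j))"
          using K0 Gw Xx by (intro mult_left_mono wamgm[OF fin ne th sumth]) (auto simp: less_imp_le)
        also have "ennreal (K * (\<Sum>j\<in>I. th j * (w j / x j))) = ennreal K * (\<Sum>j\<in>I. ennreal (th j / x j) * G j y)"
        proof -
          have "(\<Sum>j\<in>I. ennreal (th j / x j) * G j y) = (\<Sum>j\<in>I. ennreal (th j * (w j / x j)))"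
            using Gw Xx th by (intro sum.cong refl) (simp add: ennreal_mult[symmetric] less_imp_le)
          also have "\<dots> = ennreal (\<Sum>j\<in>I. th j * (w j / x j))"
            using Gw Xx th by (intro sum_ennreal) (simp add: less_imp_le)
          finally show ?thesis using K0 Gw Xx th
            by (simp add: ennreal_mult[symmetric] sum_nonneg less_imp_le)
        qed
        finally show ?thesis by (simp add: ennreal_leI)
      qed
      have "(\<integral>\<^sup>+y. H y \<partial>M) \<le> (\<integral>\<^sup>+y. ennreal c * ennreal K * (\<Sum>j\<in>I. ennreal (th j / x j) * G j y) \<partial>M)"
        by (intro nn_integral_mono order_trans[OF Hle]) (simp add: mult.assoc mult_left_mono pw)
      also have "\<dots> = ennreal c * ennreal K * (\<Sum>j\<in>I. ennreal (th j / x j) * X j)"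
        using meas by (simp add: nn_integral_cmult nn_integral_sum X_def)
      also have "(\<Sum>j\<in>I. ennreal (th j / x j) * X j) = (\<Sum>j\<in>I. ennreal (th j))"
        using Xx th by (intro sum.cong refl) (force simp: ennreal_mult[symmetric] less_imp_le)
      also have "\<dots> = 1" using th sumth by (simp add: sum_ennreal less_imp_le)
      also have "ennreal K = (\<Prod>j\<in>I. enn_powr (X j) (th j))"
      proof -
        have "(\<Prod>j\<in>I. enn_powr (X j) (th j)) = (\<Prod>j\<in>I. ennreal (x j powr th j))"
          using Xx by (intro prod.cong refl) (simp add: enn_powr_ennreal less_imp_le)
        also have "\<dots> = ennreal K" unfolding K_def by (simp add: prod_ennreal)
        finally show ?thesis by simp
      qed
      finally show ?thesis by (simp add: X_def)
    qed
  qed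
qed

lemma holo_grad:
  assumes holo: "g holomorphic_on unit_disc" and z: "z \<in> unit_disc" and n: "n \<ge> 1"
  shows "grad_abs (\<lambda>w. cmod (g w) powr (real m / real n + 1)) z
     = ennreal ((real m / real n + 1) * (cmod (g z) ^ m) powr (1 / real n) * cmod (deriv g z))"
  by (rule grad_abs_pow[OF holomorphic_derivI[OF holo open_ball z] n])

lemma prod_mono_enn:
  fixes f g :: "'b \<Rightarrow> ennreal"
  shows "(\<And>i. i \<in> A \<Longrightarrow> f i \<le> g i) \<Longrightarrow> prod f A \<le> prod g A"
  by (induct A rule: infinite_finite_induct) (auto intro!: mult_mono)

lemma bloch_K:
  fixes mm nn :: "nat \<Rightarrow> nat" and I :: "nat set" and Nn Mm :: nat
  assumes holo: "g holomorphic_on unit_disc"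
    and fin: "finite I" and ne: "I \<noteq> {}" and nn: "\<forall>j\<in>I. nn j \<ge> 1" and M: "(\<Sum>j\<in>I. mm j) \<ge> 1"
    and Nn_def: "Nn = (\<Sum>j\<in>I. nn j)" and Mm_def: "Mm = (\<Sum>j\<in>I. mm j)"
  defines "c0 \<equiv> (real Mm / real Nn + 1) / (\<Prod>j\<in>I. (real (mm j) / real (nn j) + 1) powr (real (nn j) / real Nn))"
  shows "bloch_q_pow (real Mm / real Nn + 1) g \<le> ennreal c0 *
     (\<Prod>j\<in>I. enn_powr (bloch_q_pow (real (mm j) / real (nn j) + 1) g) (real (nn j) / real Nn))"
proof -
  define F where "F m n z = (real m / real n + 1) * (cmod (g z) ^ m) powr (1 / real n) * cmod (deriv g z)" for m n z
  obtain j0 where j0: "j0 \<in> I" using ne by blast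
  have "nn j0 \<le> Nn" unfolding Nn_def using fin j0 by (intro member_le_sum) auto
  then have Nn1: "Nn \<ge> 1" using nn j0 by auto
  have F0: "F m n z \<ge> 0" for m n z unfolding F_def by simp
  have "bloch_q_pow (real Mm / real Nn + 1) g
      = (SUP z\<in>unit_disc. ennreal (1 - (cmod z)\<^sup>2) * grad_abs (\<lambda>w. cmod (g w) powr (real Mm / real Nn + 1)) z)"
    by (simp add: bloch_q_pow_def)
  also have "\<dots> \<le> ennreal c0 *
     (\<Prod>j\<in>I. enn_powr (bloch_q_pow (real (mm j) / real (nn j) + 1) g) (real (nn j) / real Nn))"
  proof (rule SUP_least)
    fix z :: complex assume z: "z \<in> unit_disc"
    define A where "A = 1 - (cmod z)\<^sup>2"
    have A: "A \<ge> 0" using z by (simp add: A_def abs_square_le_1 less_imp_le)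
    have "ennreal (1 - (cmod z)\<^sup>2) * grad_abs (\<lambda>w. cmod (g w) powr (real Mm / real Nn + 1)) z
        = ennreal (A * F Mm Nn z ^ 1)"
      using A F0 by (simp add: holo_grad[OF holo z Nn1] F_def[symmetric] A_def[symmetric] ennreal_mult)
    also have "\<dots> \<le> ennreal (c0 ^ 1 * (\<Prod>j\<in>I. (A * F (mm j) (nn j) z ^ 1) powr (real (nn j) / real Nn)))"
      using key_real[OF fin ne nn M _ _ _ Nn_def Mm_def, of "cmod (g z)" "cmod (deriv g z)" 1 A]
      by (intro ennreal_leI) (simp add: F_def c0_def)
    also have "\<dots> = ennreal c0 * (\<Prod>j\<in>I. enn_powr (ennreal (A * F (mm j) (nn j) z)) (real (nn j) / real Nn))"
    proof -
      have c0: "c0 \<ge> 0" unfolding c0_def by (intro divide_nonneg_nonneg prod_nonneg) auto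
      have "(\<Prod>j\<in>I. enn_powr (ennreal (A * F (mm j) (nn j) z)) (real (nn j) / real Nn))
          = ennreal (\<Prod>j\<in>I. (A * F (mm j) (nn j) z) powr (real (nn j) / real Nn))"
        using A F0 by (simp add: prod_ennreal enn_powr_ennreal)
      then show ?thesis using c0 by (simp add: ennreal_mult prod_nonneg)
    qed
    also have "\<dots> \<le> ennreal c0 *
        (\<Prod>j\<in>I. enn_powr (bloch_q_pow (real (mm j) / real (nn j) + 1) g) (real (nn j) / real Nn))"
    proof -
      have le_j: "ennreal (A * F (mm j) (nn j) z) \<le> bloch_q_pow (real (mm j) / real (nn j) + 1) g" if j: "j \<in> I" for j
      proof -
        have "ennreal (A * F (mm j) (nn j) z)
            = ennreal (1 - (cmod z)\<^sup>2) * grad_abs (\<lambda>w. cmod (g w) powr (real (mm j) / real (nn j) + 1)) z"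
          using A F0 nn j by (simp add: holo_grad[OF holo z] F_def[symmetric] A_def[symmetric] ennreal_mult)
        also have "\<dots> \<le> bloch_q_pow (real (mm j) / real (nn j) + 1) g"
          unfolding bloch_q_pow_def using z by (rule SUP_upper2) simp
        finally show ?thesis .
      qed
      show ?thesis using le_j by (auto intro!: mult_left_mono prod_mono_enn enn_powr_mono)
    qed
    finally show "ennreal (1 - (cmod z)\<^sup>2) * grad_abs (\<lambda>w. cmod (g w) powr (real Mm / real Nn + 1)) z
      \<le> ennreal c0 * (\<Prod>j\<in>I. enn_powr (bloch_q_pow (real (mm j) / real (nn j) + 1) g) (real (nn j) / real Nn))" .
  qed
  finally show ?thesis .
qed

lemma ennreal_max0: "ennreal (max 0 x) = ennreal x"
  by (cases "x \<ge> 0") (auto simp: max_def ennreal_neg)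

lemma div_pi_prod:
  fixes Y :: "nat \<Rightarrow> ennreal" and th :: "nat \<Rightarrow> real"
  assumes fin: "finite I" and ne: "I \<noteq> {}" and th: "\<And>j. j \<in> I \<Longrightarrow> th j > 0" and sumth: "(\<Sum>j\<in>I. th j) = 1"
  shows "(\<Prod>j\<in>I. enn_powr (Y j / ennreal pi) (th j)) = (\<Prod>j\<in>I. enn_powr (Y j) (th j)) / ennreal pi"
proof -
  have "(\<Prod>j\<in>I. enn_powr (Y j / ennreal pi) (th j))
      = (\<Prod>j\<in>I. enn_powr (Y j) (th j) * enn_powr (inverse (ennreal pi)) (th j))"
    using th by (intro prod.cong refl) (simp add: divide_ennreal_def enn_powr_mult)
  also have "\<dots> = (\<Prod>j\<in>I. enn_powr (Y j) (th j)) * (\<Prod>j\<in>I. enn_powr (inverse (ennreal pi)) (th j))"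
    by (rule prod.distrib)
  also have "(\<Prod>j\<in>I. enn_powr (inverse (ennreal pi)) (th j)) = inverse (ennreal pi)"
    using enn_powr_prod_exp[OF fin ne th] sumth by (simp add: enn_powr_one)
  finally show ?thesis by (simp add: divide_ennreal_def)
qed

lemma cont_mobius_w:
  assumes a: "a \<in> unit_disc"
  shows "continuous_on unit_disc (\<lambda>z. max 0 (1 - (cmod (mobius a z))\<^sup>2))"
proof -
  have "1 - cnj a * z \<noteq> 0" if "z \<in> unit_disc" for z
  proof
    assume "1 - cnj a * z = 0"
    then have "cmod (cnj a * z) = 1" by (metis eq_iff_diff_eq_0 norm_one)
    moreover have "cmod (cnj a * z) < 1" using a that
      by (simp add: norm_mult) (metis mult_strict_mono' norm_ge_zero mult_1_right less_le_trans order_refl)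
    ultimately show False by simp
  qed
  then show ?thesis unfolding mobius_def by (intro continuous_intros) auto
qed

lemma cont_F:
  assumes holo: "g holomorphic_on unit_disc" and n: "n \<ge> 1"
  shows "continuous_on unit_disc (\<lambda>z. (real m / real n + 1) * (cmod (g z) ^ m) powr (1 / real n) * cmod (deriv g z))"
proof -
  have cg: "continuous_on unit_disc g" using holo by (rule holomorphic_on_imp_continuous_on)
  have cd: "continuous_on unit_disc (deriv g)"
    by (rule holomorphic_on_imp_continuous_on[OF holomorphic_deriv[OF holo open_ball]])
  have "continuous_on unit_disc (\<lambda>z. (cmod (g z) ^ m) powr (1 / real n))"
    using n by (intro continuous_on_powr' continuous_intros cg) auto
  then show ?thesis
    by (intro continuous_on_mult[OF continuous_on_mult[OF continuous_on_const]] continuous_on_norm cd)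
qed

lemma bmoa_K:
  fixes mm nn :: "nat \<Rightarrow> nat" and I :: "nat set" and Nn Mm :: nat
  assumes holo: "g holomorphic_on unit_disc"
    and fin: "finite I" and ne: "I \<noteq> {}" and nn: "\<forall>j\<in>I. nn j \<ge> 1" and M: "(\<Sum>j\<in>I. mm j) \<ge> 1"
    and Nn_def: "Nn = (\<Sum>j\<in>I. nn j)" and Mm_def: "Mm = (\<Sum>j\<in>I. mm j)"
  defines "c0 \<equiv> (real Mm / real Nn + 1) / (\<Prod>j\<in>I. (real (mm j) / real (nn j) + 1) powr (real (nn j) / real Nn))"
  shows "bmoa_q_pow (real Mm / real Nn + 1) g \<le> ennreal (c0 ^ 2) *
     (\<Prod>j\<in>I. enn_powr (bmoa_q_pow (real (mm j) / real (nn j) + 1) g) (real (nn j) / real Nn))"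
proof -
  define F where "F m n z = (real m / real n + 1) * (cmod (g z) ^ m) powr (1 / real n) * cmod (deriv g z)" for m n z
  define th where "th j = real (nn j) / real Nn" for j
  obtain j0 where j0: "j0 \<in> I" using ne by blast
  have "nn j0 \<le> Nn" unfolding Nn_def using fin j0 by (intro member_le_sum) auto
  then have Nn1: "Nn \<ge> 1" using nn j0 by auto
  have th0: "th j > 0" if "j \<in> I" for j using nn that Nn1 by (auto simp: th_def)
  have sumth: "(\<Sum>j\<in>I. th j) = 1"
  proof -
    have s: "(\<Sum>j\<in>I. real (nn j)) = real Nn" by (simp add: Nn_def)
    have "(\<Sum>j\<in>I. th j) = real Nn / real Nn"
      unfolding th_def sum_divide_distrib[symmetric] s ..
    then show ?thesis using Nn1 by simp
  qed
  have F0: "F m n z \<ge> 0" for m n z unfolding F_def by simp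
  have c0: "c0 \<ge> 0" unfolding c0_def by (intro divide_nonneg_nonneg prod_nonneg) auto
  have "bmoa_q_pow (real Mm / real Nn + 1) g
      = (SUP a\<in>unit_disc. area_int (\<lambda>z. ennreal (1 - (cmod (mobius a z))\<^sup>2)
       * (grad_abs (\<lambda>w. cmod (g w) powr (real Mm / real Nn + 1)) z)\<^sup>2))"
    by (simp add: bmoa_q_pow_def)
  also have "\<dots> \<le> ennreal (c0 ^ 2) *
     (\<Prod>j\<in>I. enn_powr (bmoa_q_pow (real (mm j) / real (nn j) + 1) g) (th j))"
  proof (rule SUP_least)
    fix a :: complex assume a: "a \<in> unit_disc"
    define W where "W z = max 0 (1 - (cmod (mobius a z))\<^sup>2)" for z
    define R where "R m n z = indicator unit_disc z * (W z * F m n z ^ 2)" for m n z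
    have R0: "R m n z \<ge> 0" for m n z unfolding R_def W_def by simp
    have ai: "area_int (\<lambda>z. ennreal (1 - (cmod (mobius a z))\<^sup>2)
         * (grad_abs (\<lambda>w. cmod (g w) powr (real m / real n + 1)) z)\<^sup>2)
        = (\<integral>\<^sup>+z. ennreal (R m n z) \<partial>lborel) / ennreal pi" if n: "n \<ge> 1" for m n
      unfolding area_int_def
    proof (intro arg_cong2[where f = "(/)"] refl nn_integral_cong)
      fix z :: complex
      show "ennreal (1 - (cmod (mobius a z))\<^sup>2) * (grad_abs (\<lambda>w. cmod (g w) powr (real m / real n + 1)) z)\<^sup>2
          * indicator unit_disc z = ennreal (R m n z)"
      proof (cases "z \<in> unit_disc")
        case True
        have "ennreal (1 - (cmod (mobius a z))\<^sup>2) = ennreal (W z)" by (simp add: W_def ennreal_max0)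
        moreover have "W z \<ge> 0" by (simp add: W_def)
        ultimately show ?thesis using True F0
          by (simp add: holo_grad[OF holo True n] F_def[symmetric] R_def ennreal_power ennreal_mult)
      qed (simp add: R_def)
    qed
    have meas: "(\<lambda>z. ennreal (R m n z)) \<in> borel_measurable lborel" if n: "n \<ge> 1" for m n
    proof -
      have "continuous_on unit_disc (\<lambda>z. W z * F m n z ^ 2)"
        unfolding W_def F_def
        by (intro continuous_on_mult continuous_on_power cont_mobius_w[OF a] cont_F[OF holo n])
      then have "(\<lambda>z. indicator unit_disc z *\<^sub>R (W z * F m n z ^ 2)) \<in> borel_measurable borel"
        by (intro borel_measurable_continuous_on_indicator) auto
      then have "(\<lambda>z. R m n z) \<in> borel_measurable borel" by (simp add: R_def)
      then show ?thesis by (intro measurable_compose[OF _ measurable_ennreal]) simp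
    qed
    have pt: "ennreal (R Mm Nn z) \<le> ennreal (c0 ^ 2) * (\<Prod>j\<in>I. enn_powr (ennreal (R (mm j) (nn j) z)) (th j))" for z
    proof -
      define A where "A = indicator unit_disc z * W z"
      have A: "A \<ge> 0" by (simp add: A_def W_def)
      have "R Mm Nn z = A * F Mm Nn z ^ 2" by (simp add: R_def A_def)
      also have "\<dots> \<le> c0 ^ 2 * (\<Prod>j\<in>I. (A * F (mm j) (nn j) z ^ 2) powr (th j))"
        using key_real[OF fin ne nn M _ _ _ Nn_def Mm_def, of "cmod (g z)" "cmod (deriv g z)" 2 A]
        by (simp add: F_def c0_def th_def)
      also have "(\<Prod>j\<in>I. (A * F (mm j) (nn j) z ^ 2) powr (th j)) = (\<Prod>j\<in>I. (R (mm j) (nn j) z) powr (th j))"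
        by (simp add: R_def A_def mult.assoc)
      finally have "ennreal (R Mm Nn z) \<le> ennreal (c0 ^ 2 * (\<Prod>j\<in>I. (R (mm j) (nn j) z) powr (th j)))"
        by (rule ennreal_leI)
      also have "\<dots> = ennreal (c0 ^ 2) * (\<Prod>j\<in>I. enn_powr (ennreal (R (mm j) (nn j) z)) (th j))"
        using c0 R0 by (simp add: ennreal_mult prod_ennreal enn_powr_ennreal prod_nonneg)
      finally show ?thesis .
    qed
    have "area_int (\<lambda>z. ennreal (1 - (cmod (mobius a z))\<^sup>2)
       * (grad_abs (\<lambda>w. cmod (g w) powr (real Mm / real Nn + 1)) z)\<^sup>2)
       = (\<integral>\<^sup>+z. ennreal (R Mm Nn z) \<partial>lborel) / ennreal pi" by (rule ai[OF Nn1])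
    also have "\<dots> \<le> (ennreal (c0 ^ 2) * (\<Prod>j\<in>I. enn_powr (\<integral>\<^sup>+z. ennreal (R (mm j) (nn j) z) \<partial>lborel) (th j))) / ennreal pi"
      unfolding divide_ennreal_def
      by (intro mult_right_mono holder_gen[OF fin ne th0 sumth] pt) (use meas nn in auto)
    also have "\<dots> = ennreal (c0 ^ 2) * (\<Prod>j\<in>I. enn_powr ((\<integral>\<^sup>+z. ennreal (R (mm j) (nn j) z) \<partial>lborel) / ennreal pi) (th j))"
      by (simp add: div_pi_prod[OF fin ne th0 sumth] ennreal_times_divide)
    also have "\<dots> \<le> ennreal (c0 ^ 2) * (\<Prod>j\<in>I. enn_powr (bmoa_q_pow (real (mm j) / real (nn j) + 1) g) (th j))"
    proof -
      have le_j: "(\<integral>\<^sup>+z. ennreal (R (mm j) (nn j) z) \<partial>lborel) / ennreal pi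
          \<le> bmoa_q_pow (real (mm j) / real (nn j) + 1) g" if j: "j \<in> I" for j
        unfolding ai[OF nn[rule_format, OF j], symmetric] bmoa_q_pow_def
        using a by (rule SUP_upper2) simp
      show ?thesis using le_j th0 by (auto intro!: mult_left_mono prod_mono_enn enn_powr_mono simp: less_imp_le)
    qed
    finally show "area_int (\<lambda>z. ennreal (1 - (cmod (mobius a z))\<^sup>2)
       * (grad_abs (\<lambda>w. cmod (g w) powr (real Mm / real Nn + 1)) z)\<^sup>2)
       \<le> ennreal (c0 ^ 2) * (\<Prod>j\<in>I. enn_powr (bmoa_q_pow (real (mm j) / real (nn j) + 1) g) (th j))" .
  qed
  finally show ?thesis by (simp add: th_def)
qed

theorem corollary1p2:
  fixes \<alpha> :: real and k :: nat and mm nn :: "nat \<Rightarrow> nat"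
  assumes "\<alpha> \<ge> -1"
    and "\<forall>j\<in>{1..k}. nn j \<ge> 1"
    and "(\<Sum>j=1..k. mm j) \<ge> 1"
    and "(\<Sum>j=1..k. nn j) \<ge> 1"
  shows "\<exists>C::real. C > 0 \<and>
    (\<forall>g. g holomorphic_on unit_disc \<longrightarrow>
      B_alpha_norm \<alpha> (real (\<Sum>j=1..k. mm j) / real (\<Sum>j=1..k. nn j) + 1) g
          ^ ((\<Sum>j=1..k. mm j) + (\<Sum>j=1..k. nn j))
      \<le> ennreal C * (\<Prod>j=1..k. B_alpha_norm \<alpha> (real (mm j) / real (nn j) + 1) g ^ (mm j + nn j)))"
proof -
  have fin: "finite {1..k}" by simp
  have ne: "{1..k} \<noteq> {}" using assms(3) by (cases k) auto
  define c0 where "c0 = (real (\<Sum>j=1..k. mm j) / real (\<Sum>j=1..k. nn j) + 1) /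
      (\<Prod>j=1..k. (real (mm j) / real (nn j) + 1) powr (real (nn j) / real (\<Sum>j=1..k. nn j)))"
  have c0pos: "c0 > 0"
  proof -
    have "(\<Prod>j=1..k. (real (mm j) / real (nn j) + 1) powr (real (nn j) / real (\<Sum>j=1..k. nn j))) > 0"
    proof (intro prod_pos)
      fix j have "real (mm j) / real (nn j) + 1 > 0" by (simp add: add_nonneg_pos)
      then show "0 < (real (mm j) / real (nn j) + 1) powr (real (nn j) / real (\<Sum>j=1..k. nn j))" by simp
    qed
    moreover have "real (\<Sum>j=1..k. mm j) / real (\<Sum>j=1..k. nn j) + 1 > 0"
      by (intro add_nonneg_pos divide_nonneg_nonneg) (simp_all del: of_nat_sum)
    ultimately show ?thesis unfolding c0_def by simp
  qed
  show ?thesis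
  proof (cases "\<alpha> = -1")
    case True
    show ?thesis
    proof (intro exI[of _ "(c0 ^ 2) powr (real (\<Sum>j=1..k. nn j) / 2)"] conjI allI impI)
      show "0 < (c0 ^ 2) powr (real (\<Sum>j=1..k. nn j) / 2)" using c0pos by simp
      fix g :: "complex \<Rightarrow> complex" assume holo: "g holomorphic_on unit_disc"
      have K: "bmoa_q_pow (real (\<Sum>j=1..k. mm j) / real (\<Sum>j=1..k. nn j) + 1) g \<le> ennreal (c0 ^ 2) *
         (\<Prod>j\<in>{1..k}. enn_powr (bmoa_q_pow (real (mm j) / real (nn j) + 1) g) (real (nn j) / real (\<Sum>j=1..k. nn j)))"
        using bmoa_K[OF holo fin ne assms(2) assms(3) refl refl] unfolding c0_def .
      have "0 < c0 ^ 2" using c0pos by simp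
      from final_step[OF fin ne assms(2) refl refl _ this K, of 2]
      show "B_alpha_norm \<alpha> (real (\<Sum>j=1..k. mm j) / real (\<Sum>j=1..k. nn j) + 1) g
          ^ ((\<Sum>j=1..k. mm j) + (\<Sum>j=1..k. nn j))
        \<le> ennreal ((c0 ^ 2) powr (real (\<Sum>j=1..k. nn j) / 2)) *
          (\<Prod>j=1..k. B_alpha_norm \<alpha> (real (mm j) / real (nn j) + 1) g ^ (mm j + nn j))"
        by (simp add: B_alpha_norm_def bmoa_q_norm_def True)
    qed
  next
    case False
    show ?thesis
    proof (intro exI[of _ "c0 powr (real (\<Sum>j=1..k. nn j) / 1)"] conjI allI impI)
      show "0 < c0 powr (real (\<Sum>j=1..k. nn j) / 1)" using c0pos by simp
      fix g :: "complex \<Rightarrow> complex" assume holo: "g holomorphic_on unit_disc"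
      have K: "bloch_q_pow (real (\<Sum>j=1..k. mm j) / real (\<Sum>j=1..k. nn j) + 1) g \<le> ennreal c0 *
         (\<Prod>j\<in>{1..k}. enn_powr (bloch_q_pow (real (mm j) / real (nn j) + 1) g) (real (nn j) / real (\<Sum>j=1..k. nn j)))"
        using bloch_K[OF holo fin ne assms(2) assms(3) refl refl] unfolding c0_def .
      from final_step[OF fin ne assms(2) refl refl _ c0pos K, of 1]
      show "B_alpha_norm \<alpha> (real (\<Sum>j=1..k. mm j) / real (\<Sum>j=1..k. nn j) + 1) g
          ^ ((\<Sum>j=1..k. mm j) + (\<Sum>j=1..k. nn j))
        \<le> ennreal (c0 powr (real (\<Sum>j=1..k. nn j) / 1)) *
          (\<Prod>j=1..k. B_alpha_norm \<alpha> (real (mm j) / real (nn j) + 1) g ^ (mm j + nn j))"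
        by (simp add: B_alpha_norm_def bloch_q_norm_def False)
    qed
  qed
qed

end
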